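(* Let $\phi$ be a strictly convex norm on $\mathbf{R}^n$ of class $\mathcal{C}^2$ on $\mathbf{R}^n\setminus\{0\}$ and $K\subseteq\mathbf{R}^n$ closed. Then $r^\phi_K:N^\phi(K)\to(0,\infty]$ is upper semicontinuous. Moreover, $$N^\phi(K)=\{(\xi^\phi_K(x),\nu^\phi_K(x)):x\in\mathbf{R}^n\setminus(K\cup\mathrm{Cut}^\phi(K))\}$$ and $r^\phi_K(\xi^\phi_K(x),\nu^\phi_K(x))=\delta^\phi_K(x)\,\rho^\phi_K(x)$ for all $x\in\mathbf{R}^n\setminus(K\cup\mathrm{Cut}^\phi(K))$.
   Context: A norm $\phi$ is strictly convex if $\phi(a+b)=\phi(a)+\phi(b)$ implies $\phi(b)a=\phi(a)b$. For closed $K$: $\delta^\phi_K(x)=\inf\{\phi(y-x):y\in K\}$; $\xi^\phi_K(x)=K\cap\{w:\phi(x-w)=\delta^\phi_K(x)\}$ (a singleton, identified with its element, for $x\notin K\cup\mathrm{Cut}^\phi(K)$); $\nu^\phi_K(x)=\delta^\phi_K(x)^{-1}(x-\xi^\phi_K(x))$ for $x\notin K$; $\rho^\phi_K(x)=\sup\bigl(\mathbf{R}\cap\{s:\delta^\phi_K(a+s(x-a))=s\,\delta^\phi_K(x)\}\bigr)$ for any $a\in\xi^\phi_K(x)$; $N^\phi(K)=\{(a,\eta)\in\mathbf{R}^n\times\mathbf{R}^n:a\in K,\ \phi(\eta)=1,\ \delta^\phi_K(a+s\eta)=s\text{ for some }s>0\}$; $r^\phi_K(a,\eta)=\sup\{s>0:\delta^\phi_K(a+s\eta)=s\}$;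 $\mathrm{Cut}^\phi(K)=\{a+r^\phi_K(a,\eta)\eta:(a,\eta)\in N^\phi(K),\ r^\phi_K(a,\eta)<\infty\}$. Upper semicontinuity refers to the topology of $N^\phi(K)\subseteq\mathbf{R}^{2n}$. *)

theory Defs
  imports "HOL-Analysis.Analysis"
begin

definition is_norm :: "('a::euclidean_space \<Rightarrow> real) \<Rightarrow> bool" where
  "is_norm \<phi> \<longleftrightarrow> (\<forall>x. \<phi> x = 0 \<longleftrightarrow> x = 0) \<and> (\<forall>t x. \<phi> (t *\<^sub>R x) = \<bar>t\<bar> * \<phi> x)
     \<and> (\<forall>x y. \<phi> (x + y) \<le> \<phi> x + \<phi> y)"

definition strictly_convex_norm :: "('a::euclidean_space \<Rightarrow> real) \<Rightarrow> bool" where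
  "strictly_convex_norm \<phi> \<longleftrightarrow> is_norm \<phi> \<and>
     (\<forall>a b. \<phi> (a + b) = \<phi> a + \<phi> b \<longrightarrow> \<phi> b *\<^sub>R a = \<phi> a *\<^sub>R b)"

definition C2_on :: "'a::euclidean_space set \<Rightarrow> ('a \<Rightarrow> real) \<Rightarrow> bool" where
  "C2_on S f \<longleftrightarrow> (\<exists>D1 :: 'a \<Rightarrow> ('a \<Rightarrow>\<^sub>L real). \<exists>D2 :: 'a \<Rightarrow> ('a \<Rightarrow>\<^sub>L ('a \<Rightarrow>\<^sub>L real)).
     (\<forall>x\<in>S. (f has_derivative blinfun_apply (D1 x)) (at x)) \<and>
     (\<forall>x\<in>S. (D1 has_derivative blinfun_apply (D2 x)) (at x)) \<and>
     continuous_on S D2)"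

definition dist_phi :: "('a::euclidean_space \<Rightarrow> real) \<Rightarrow> 'a set \<Rightarrow> 'a \<Rightarrow> real" where
  "dist_phi \<phi> K x = Inf ((\<lambda>y. \<phi> (y - x)) ` K)"

definition xi_set :: "('a::euclidean_space \<Rightarrow> real) \<Rightarrow> 'a set \<Rightarrow> 'a \<Rightarrow> 'a set" where
  "xi_set \<phi> K x = K \<inter> {w. \<phi> (x - w) = dist_phi \<phi> K x}"

text \<open>The nearest point, when \<open>xi_set\<close> is a singleton.\<close>
definition xi_pt :: "('a::euclidean_space \<Rightarrow> real) \<Rightarrow> 'a set \<Rightarrow> 'a \<Rightarrow> 'a" where
  "xi_pt \<phi> K x = the_elem (xi_set \<phi> K x)"

definition nu_phi :: "('a::euclidean_space \<Rightarrow> real) \<Rightarrow> 'a set \<Rightarrow> 'a \<Rightarrow> 'a" where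
  "nu_phi \<phi> K x = (1 / dist_phi \<phi> K x) *\<^sub>R (x - xi_pt \<phi> K x)"

definition rho_phi :: "('a::euclidean_space \<Rightarrow> real) \<Rightarrow> 'a set \<Rightarrow> 'a \<Rightarrow> ereal" where
  "rho_phi \<phi> K x = (let a = xi_pt \<phi> K x in
     Sup (ereal ` {s. dist_phi \<phi> K (a + s *\<^sub>R (x - a)) = s * dist_phi \<phi> K x}))"

definition normal_bundle :: "('a::euclidean_space \<Rightarrow> real) \<Rightarrow> 'a set \<Rightarrow> ('a \<times> 'a) set" where
  "normal_bundle \<phi> K = {(a, \<eta>). a \<in> K \<and> \<phi> \<eta> = 1 \<and> (\<exists>s>0. dist_phi \<phi> K (a + s *\<^sub>R \<eta>) = s)}"

definition reach_phi :: "('a::euclidean_space \<Rightarrow> real) \<Rightarrow> 'a set \<Rightarrow> 'a \<times> 'a \<Rightarrow> ereal" where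
  "reach_phi \<phi> K p = (case p of (a, \<eta>) \<Rightarrow>
     Sup (ereal ` {s. s > 0 \<and> dist_phi \<phi> K (a + s *\<^sub>R \<eta>) = s}))"

definition cut_phi :: "('a::euclidean_space \<Rightarrow> real) \<Rightarrow> 'a set \<Rightarrow> 'a set" where
  "cut_phi \<phi> K = {a + real_of_ereal (reach_phi \<phi> K (a, \<eta>)) *\<^sub>R \<eta> | a \<eta>.
     (a, \<eta>) \<in> normal_bundle \<phi> K \<and> reach_phi \<phi> K (a, \<eta>) < \<infinity>}"

definition usc_on :: "'b::topological_space set \<Rightarrow> ('b \<Rightarrow> ereal) \<Rightarrow> bool" where
  "usc_on S f \<longleftrightarrow> (\<forall>p\<in>S. \<forall>c. f p < c \<longrightarrow> (\<forall>\<^sub>F q in at p within S. f q < c))"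

end

theory Submission
  imports Defs
begin

lemma nrm_scale: "is_norm \<phi> \<Longrightarrow> \<phi> (t *\<^sub>R x) = \<bar>t\<bar> * \<phi> x"
  by (simp add: is_norm_def)
lemma nrm_0: "is_norm \<phi> \<Longrightarrow> \<phi> 0 = 0"
  by (simp add: is_norm_def)
lemma nrm_eq0: "is_norm \<phi> \<Longrightarrow> \<phi> x = 0 \<longleftrightarrow> x = 0"
  by (simp add: is_norm_def)
lemma nrm_tri: "is_norm \<phi> \<Longrightarrow> \<phi> (x + y) \<le> \<phi> x + \<phi> y"
  by (simp add: is_norm_def)
lemma nrm_neg: "is_norm \<phi> \<Longrightarrow> \<phi> (- x) = \<phi> x"
  using nrm_scale[of \<phi> "-1" x] by simp
lemma nrm_commute: "is_norm \<phi> \<Longrightarrow> \<phi> (x - y) = \<phi> (y - x)"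
  using nrm_neg[of \<phi> "x - y"] by simp
lemma nrm_nonneg: "is_norm \<phi> \<Longrightarrow> 0 \<le> \<phi> x"
  using nrm_tri[of \<phi> x "-x"] nrm_neg[of \<phi> x] nrm_0[of \<phi>] by simp
lemma nrm_tri_diff: "is_norm \<phi> \<Longrightarrow> \<phi> (x - z) \<le> \<phi> (x - y) + \<phi> (y - z)"
  using nrm_tri[of \<phi> "x - y" "y - z"] by simp
lemma nrm_diff_abs: "is_norm \<phi> \<Longrightarrow> \<bar>\<phi> x - \<phi> y\<bar> \<le> \<phi> (x - y)"
  using nrm_tri_diff[of \<phi> x 0 y] nrm_tri_diff[of \<phi> y 0 x] nrm_commute[of \<phi> x y] by simp

lemma nrm_sum: assumes "is_norm \<phi>" "finite S" shows "\<phi> (sum f S) \<le> (\<Sum>i\<in>S. \<phi> (f i))"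
  using assms(2)
proof (induction S rule: finite_induct)
  case empty then show ?case by (simp add: nrm_0[OF assms(1)])
next
  case (insert x F)
  then show ?case using nrm_tri[OF assms(1), of "f x" "sum f F"] by simp
qed

lemma nrm_upper:
  fixes \<phi> :: "'a::euclidean_space \<Rightarrow> real"
  assumes "is_norm \<phi>" shows "\<exists>C\<ge>0. \<forall>x. \<phi> x \<le> C * norm x"
proof (intro exI[of _ "\<Sum>b\<in>Basis. \<phi> b"] conjI allI)
  show "0 \<le> (\<Sum>b\<in>Basis. \<phi> b)" by (simp add: assms nrm_nonneg sum_nonneg)
  fix x :: 'a
  have "\<phi> x = \<phi> (\<Sum>b\<in>Basis. (x \<bullet> b) *\<^sub>R b)" by (simp add: euclidean_representation)
  also have "\<dots> \<le> (\<Sum>b\<in>Basis. \<phi> ((x \<bullet> b) *\<^sub>R b))" by (rule nrm_sum[OF assms]) simp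
  also have "\<dots> = (\<Sum>b\<in>Basis. \<bar>x \<bullet> b\<bar> * \<phi> b)" by (simp add: nrm_scale[OF assms])
  also have "\<dots> \<le> (\<Sum>b\<in>Basis. norm x * \<phi> b)"
    by (intro sum_mono mult_right_mono) (auto simp: Basis_le_norm nrm_nonneg[OF assms])
  finally show "\<phi> x \<le> (\<Sum>b\<in>Basis. \<phi> b) * norm x" by (simp add: sum_distrib_left mult.commute)
qed

lemma lip_cont:
  fixes f :: "'a::real_normed_vector \<Rightarrow> real"
  assumes "C \<ge> 0" "\<And>x y. \<bar>f x - f y\<bar> \<le> C * norm (x - y)"
  shows "continuous_on S f"
proof -
  have "C-lipschitz_on S f" by (rule lipschitz_onI) (use assms in \<open>auto simp: dist_real_def dist_norm\<close>)
  then show ?thesis by (rule lipschitz_on_continuous_on)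
qed

lemma nrm_cont:
  fixes \<phi> :: "'a::euclidean_space \<Rightarrow> real"
  assumes "is_norm \<phi>" shows "continuous_on S \<phi>"
proof -
  obtain C where C: "C \<ge> 0" "\<And>x. \<phi> x \<le> C * norm x" using nrm_upper[OF assms] by blast
  show ?thesis
    by (rule lip_cont[OF C(1)]) (meson C(2) assms nrm_diff_abs order_trans)
qed

lemma nrm_lower:
  fixes \<phi> :: "'a::euclidean_space \<Rightarrow> real"
  assumes "is_norm \<phi>" shows "\<exists>m>0. \<forall>x. m * norm x \<le> \<phi> x"
proof -
  obtain b :: 'a where b: "b \<in> Basis" using nonempty_Basis by blast
  have ne: "sphere (0::'a) 1 \<noteq> {}" using b by (auto simp: norm_Basis)
  obtain z where z: "z \<in> sphere (0::'a) 1" "\<And>y. y \<in> sphere 0 1 \<Longrightarrow> \<phi> z \<le> \<phi> y"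
    using continuous_attains_inf[OF compact_sphere ne nrm_cont[OF assms]] by blast
  have zpos: "\<phi> z > 0" using z(1) nrm_eq0[OF assms, of z] nrm_nonneg[OF assms, of z] by auto
  show ?thesis
  proof (intro exI[of _ "\<phi> z"] conjI allI zpos)
    fix x :: 'a
    show "\<phi> z * norm x \<le> \<phi> x"
    proof (cases "x = 0")
      case True then show ?thesis by (simp add: nrm_0[OF assms])
    next
      case False
      have "\<phi> z \<le> \<phi> ((1 / norm x) *\<^sub>R x)" using z(2)[of "(1 / norm x) *\<^sub>R x"] False by simp
      also have "\<dots> = \<phi> x / norm x" by (simp add: nrm_scale[OF assms])
      finally show ?thesis using False by (simp add: field_simps)
    qed
  qed
qed


locale NK =
  fixes \<phi> :: "'a::euclidean_space \<Rightarrow> real" and K :: "'a set"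
  assumes N: "is_norm \<phi>" and cK: "closed K" and neK: "K \<noteq> {}"
begin

abbreviation "\<delta> \<equiv> dist_phi \<phi> K"

lemma bdd: "bdd_below ((\<lambda>y. \<phi> (y - x)) ` K)"
  by (rule bdd_belowI[of _ 0]) (auto simp: nrm_nonneg[OF N])

lemma d_le: "y \<in> K \<Longrightarrow> \<delta> x \<le> \<phi> (y - x)"
  unfolding dist_phi_def by (rule cInf_lower) (auto simp: bdd)

lemma d_nonneg: "0 \<le> \<delta> x"
  unfolding dist_phi_def using neK by (intro cInf_greatest) (auto simp: nrm_nonneg[OF N])

lemma d_attained: "\<exists>y\<in>K. \<phi> (y - x) = \<delta> x"
proof -
  obtain y0 where y0: "y0 \<in> K" using neK by blast
  obtain m where m: "m > 0" "\<And>x. m * norm x \<le> \<phi> x" using nrm_lower[OF N] by blast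
  define R where "R = \<phi> (y0 - x) / m"
  let ?S = "K \<inter> cball x R"
  have y0S: "y0 \<in> ?S" using m(2)[of "y0 - x"] m(1) y0
    by (auto simp: R_def field_simps dist_norm norm_minus_commute)
  have "compact ?S" using cK by (metis closed_Int_compact compact_cball)
  then obtain z where z: "z \<in> ?S" "\<And>y. y \<in> ?S \<Longrightarrow> \<phi> (z - x) \<le> \<phi> (y - x)"
    using continuous_attains_inf[of ?S "\<lambda>y. \<phi> (y - x)"] y0S
    by (metis (no_types, lifting) continuous_on_compose2[OF nrm_cont[OF N] continuous_on_diff[OF continuous_on_id continuous_on_const]] empty_iff subset_UNIV)
  have low: "\<phi> (z - x) \<le> \<phi> (y - x)" if "y \<in> K" for y
  proof (cases "y \<in> cball x R")
    case True then show ?thesis using z(2) that by blast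
  next
    case False
    then have "R < norm (y - x)" by (simp add: dist_norm norm_minus_commute)
    then have "m * R < m * norm (y - x)" using m(1) by simp
    then have "\<phi> (y0 - x) < \<phi> (y - x)" using m(2)[of "y - x"] m(1) by (simp add: R_def)
    moreover have "\<phi> (z - x) \<le> \<phi> (y0 - x)" using z(2) y0S by blast
    ultimately show ?thesis by simp
  qed
  have "\<delta> x = \<phi> (z - x)" unfolding dist_phi_def
    by (rule cInf_eq_minimum) (use z(1) low in auto)
  then show ?thesis using z(1) by auto
qed

lemma d_lip: "\<delta> x \<le> \<delta> y + \<phi> (x - y)"
proof -
  obtain z where z: "z \<in> K" "\<phi> (z - y) = \<delta> y" using d_attained by blast
  have "\<delta> x \<le> \<phi> (z - x)" using d_le z(1) .
  also have "\<dots> \<le> \<phi> (z - y) + \<phi> (y - x)" by (rule nrm_tri_diff[OF N])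
  finally show ?thesis using z(2) nrm_commute[OF N, of x y] by simp
qed

lemma d_cont: "continuous_on S \<delta>"
proof -
  obtain C where C: "C \<ge> 0" "\<And>x. \<phi> x \<le> C * norm x" using nrm_upper[OF N] by blast
  show ?thesis
  proof (rule lip_cont[OF C(1)])
    fix x y
    show "\<bar>\<delta> x - \<delta> y\<bar> \<le> C * norm (x - y)"
      using d_lip[of x y] d_lip[of y x] C(2)[of "x - y"] nrm_commute[OF N, of x y] by linarith
  qed
qed

lemma d_zero_iff: "\<delta> x = 0 \<longleftrightarrow> x \<in> K"
proof
  assume "\<delta> x = 0"
  then obtain y where "y \<in> K" "\<phi> (y - x) = 0" using d_attained by metis
  then show "x \<in> K" using nrm_eq0[OF N] by auto
next
  assume "x \<in> K"
  then show "\<delta> x = 0" using d_le[of x x] d_nonneg[of x] by (simp add: nrm_0[OF N])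
qed

lemma d_ray_le: "a \<in> K \<Longrightarrow> \<phi> \<eta> = 1 \<Longrightarrow> t \<ge> 0 \<Longrightarrow> \<delta> (a + t *\<^sub>R \<eta>) \<le> t"
  using d_le[of a "a + t *\<^sub>R \<eta>"] nrm_neg[OF N, of "t *\<^sub>R \<eta>"] by (simp add: nrm_scale[OF N])

lemma interval:
  assumes "a \<in> K" "\<phi> \<eta> = 1" "0 \<le> t" "t \<le> s" "\<delta> (a + s *\<^sub>R \<eta>) = s"
  shows "\<delta> (a + t *\<^sub>R \<eta>) = t"
proof -
  have "s \<le> \<delta> (a + t *\<^sub>R \<eta>) + \<phi> ((a + s *\<^sub>R \<eta>) - (a + t *\<^sub>R \<eta>))"
    using d_lip[of "a + s *\<^sub>R \<eta>" "a + t *\<^sub>R \<eta>"] assms(5) by simp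
  also have "(a + s *\<^sub>R \<eta>) - (a + t *\<^sub>R \<eta>) = (s - t) *\<^sub>R \<eta>" by (simp add: algebra_simps)
  finally have "s \<le> \<delta> (a + t *\<^sub>R \<eta>) + (s - t)" using assms by (simp add: nrm_scale[OF N])
  then show ?thesis using d_ray_le[OF assms(1,2,3)] by simp
qed

end

locale SNK = NK +
  assumes SC: "strictly_convex_norm \<phi>"
begin

definition "Rs a \<eta> = {s. s > 0 \<and> \<delta> (a + s *\<^sub>R \<eta>) = s}"

lemma reach_eq: "reach_phi \<phi> K (a, \<eta>) = Sup (ereal ` Rs a \<eta>)"
  by (simp add: reach_phi_def Rs_def)

lemma uniq:
  assumes a: "a \<in> K" "\<phi> \<eta> = 1" and ts: "0 < t" "t < s" "\<delta> (a + s *\<^sub>R \<eta>) = s"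
    and b: "b \<in> K" "\<phi> ((a + t *\<^sub>R \<eta>) - b) = \<delta> (a + t *\<^sub>R \<eta>)"
  shows "b = a"
proof -
  define x where "x = a + t *\<^sub>R \<eta>"
  define y where "y = a + s *\<^sub>R \<eta>"
  have dx: "\<delta> x = t" unfolding x_def by (rule interval[OF a]) (use ts in auto)
  have xb: "\<phi> (x - b) = t" using b(2) dx by (simp add: x_def)
  have yx: "y - x = (s - t) *\<^sub>R \<eta>" by (simp add: x_def y_def algebra_simps)
  have pyx: "\<phi> (y - x) = s - t" using yx ts a(2) by (simp add: nrm_scale[OF N])
  have "s \<le> \<phi> (b - y)" using d_le[OF b(1), of y] ts(3) by (simp add: y_def)
  then have ge: "s \<le> \<phi> ((y - x) + (x - b))" using nrm_commute[OF N, of b y] by simp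
  have le: "\<phi> ((y - x) + (x - b)) \<le> s" using nrm_tri[OF N, of "y - x" "x - b"] pyx xb by simp
  have "\<phi> ((y - x) + (x - b)) = \<phi> (y - x) + \<phi> (x - b)" using ge le pyx xb by simp
  then have "\<phi> (x - b) *\<^sub>R (y - x) = \<phi> (y - x) *\<^sub>R (x - b)"
    using SC unfolding strictly_convex_norm_def by blast
  then have "t *\<^sub>R (y - x) = (s - t) *\<^sub>R (x - b)"
    by (simp only: xb pyx)
  then have "t *\<^sub>R ((s - t) *\<^sub>R \<eta>) = (s - t) *\<^sub>R (x - b)"
    by (simp only: yx)
  then have "(s - t) *\<^sub>R (t *\<^sub>R \<eta>) = (s - t) *\<^sub>R (x - b)" by (simp add: mult.commute)
  moreover have "s - t \<noteq> 0" using ts by simp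
  ultimately have "t *\<^sub>R \<eta> = x - b" using scaleR_cancel_left by blast
  then show ?thesis by (simp add: x_def)
qed

lemma reach_ge: "s \<in> Rs a \<eta> \<Longrightarrow> ereal s \<le> reach_phi \<phi> K (a, \<eta>)"
  unfolding reach_eq by (rule Sup_upper) simp

lemma reach_less: "ereal u < reach_phi \<phi> K (a, \<eta>) \<Longrightarrow> \<exists>s\<in>Rs a \<eta>. u < s"
  unfolding reach_eq less_Sup_iff by auto

lemma below_in:
  assumes "a \<in> K" "\<phi> \<eta> = 1" "0 < u" "ereal u < reach_phi \<phi> K (a, \<eta>)"
  shows "u \<in> Rs a \<eta>"
proof -
  obtain s where "s \<in> Rs a \<eta>" "u < s" using reach_less[OF assms(4)] by blast
  then show ?thesis using interval[OF assms(1,2), of u s] assms(3) by (simp add: Rs_def)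
qed

lemma reach_attained:
  assumes p: "(a, \<eta>) \<in> normal_bundle \<phi> K" and fin: "reach_phi \<phi> K (a, \<eta>) < \<infinity>"
  shows "\<exists>r>0. reach_phi \<phi> K (a, \<eta>) = ereal r \<and> \<delta> (a + r *\<^sub>R \<eta>) = r"
proof -
  have a: "a \<in> K" "\<phi> \<eta> = 1" and "\<exists>s>0. \<delta> (a + s *\<^sub>R \<eta>) = s" using p by (auto simp: normal_bundle_def)
  then obtain s1 where s1: "s1 \<in> Rs a \<eta>" by (auto simp: Rs_def)
  have ge: "ereal s1 \<le> reach_phi \<phi> K (a, \<eta>)" by (rule reach_ge[OF s1])
  then obtain r where r: "reach_phi \<phi> K (a, \<eta>) = ereal r" using fin
    by (cases "reach_phi \<phi> K (a, \<eta>)") auto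
  have rpos: "r > 0" using ge r s1 by (auto simp: Rs_def)
  define D where "D = \<delta> (a + r *\<^sub>R \<eta>)"
  have Dle: "D \<le> r" using d_ray_le[OF a] rpos by (simp add: D_def)
  have "\<not> D < r"
  proof
    assume Dr: "D < r"
    define u where "u = (D + 3 * r) / 4"
    have D0: "0 \<le> D" by (simp add: D_def d_nonneg)
    have u: "0 < u" "u < r" using D0 Dr rpos by (auto simp: u_def)
    have "u \<in> Rs a \<eta>" by (rule below_in[OF a u(1)]) (use r u in simp)
    then have du: "\<delta> (a + u *\<^sub>R \<eta>) = u" by (simp add: Rs_def)
    have "\<delta> (a + u *\<^sub>R \<eta>) \<le> \<delta> (a + r *\<^sub>R \<eta>) + \<phi> ((a + u *\<^sub>R \<eta>) - (a + r *\<^sub>R \<eta>))" by (rule d_lip)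
    also have "(a + u *\<^sub>R \<eta>) - (a + r *\<^sub>R \<eta>) = (u - r) *\<^sub>R \<eta>" by (simp add: algebra_simps)
    finally have "u \<le> D + (r - u)" using du u a(2) by (simp add: nrm_scale[OF N] D_def)
    then show False using Dr unfolding u_def by (simp add: field_simps)
  qed
  then show ?thesis using Dle rpos r by (auto simp: D_def)
qed

lemma xi_unique:
  assumes x: "x \<notin> K" "x \<notin> cut_phi \<phi> K" and a: "a \<in> K" "\<phi> (a - x) = \<delta> x"
  shows "xi_set \<phi> K x = {a}" "\<delta> x > 0"
proof -
  define d where "d = \<delta> x"
  show dpos: "\<delta> x > 0" using d_zero_iff[of x] d_nonneg[of x] x(1) by simp
  define \<eta> where "\<eta> = (1 / d) *\<^sub>R (x - a)"
  have xa: "\<phi> (x - a) = d" using a(2) nrm_commute[OF N, of x a] by (simp add: d_def)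
  have eta1: "\<phi> \<eta> = 1" using dpos xa by (simp add: \<eta>_def nrm_scale[OF N] d_def)
  have xeq: "a + d *\<^sub>R \<eta> = x" using dpos by (simp add: \<eta>_def d_def)
  have dR: "d \<in> Rs a \<eta>" using xeq dpos by (simp add: Rs_def d_def)
  have inN: "(a, \<eta>) \<in> normal_bundle \<phi> K" using a(1) eta1 dR by (auto simp: normal_bundle_def Rs_def)
  have "\<exists>s\<in>Rs a \<eta>. d < s"
  proof (rule ccontr)
    assume "\<not> ?thesis"
    then have "reach_phi \<phi> K (a, \<eta>) \<le> ereal d" unfolding reach_eq by (intro Sup_least) auto
    then have req: "reach_phi \<phi> K (a, \<eta>) = ereal d" using reach_ge[OF dR] by simp
    have "x \<in> cut_phi \<phi> K" unfolding cut_phi_def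
      using inN req xeq by (intro CollectI exI[of _ a] exI[of _ \<eta>]) auto
    then show False using x(2) by simp
  qed
  then obtain s where s: "s \<in> Rs a \<eta>" "d < s" by blast
  show "xi_set \<phi> K x = {a}"
  proof
    show "{a} \<subseteq> xi_set \<phi> K x" using a xa by (simp add: xi_set_def d_def)
    show "xi_set \<phi> K x \<subseteq> {a}"
    proof
      fix b assume "b \<in> xi_set \<phi> K x"
      then have b: "b \<in> K" "\<phi> (x - b) = \<delta> x" by (auto simp: xi_set_def)
      have "b = a" by (rule uniq[OF a(1) eta1, of d s]) (use s dpos b xeq in \<open>auto simp: Rs_def d_def\<close>)
      then show "b \<in> {a}" by simp
    qed
  qed
qed


lemma reach_le_s0:
  assumes "b \<in> K" "\<phi> \<zeta> = 1" "0 < s0" "\<delta> (b + s0 *\<^sub>R \<zeta>) \<noteq> s0"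
  shows "reach_phi \<phi> K (b, \<zeta>) \<le> ereal s0"
  unfolding reach_eq
proof (rule Sup_least)
  fix z assume "z \<in> ereal ` Rs b \<zeta>"
  then obtain s where s: "s \<in> Rs b \<zeta>" "z = ereal s" by blast
  have "s \<le> s0"
  proof (rule ccontr)
    assume "\<not> s \<le> s0"
    then have "\<delta> (b + s0 *\<^sub>R \<zeta>) = s0" using interval[OF assms(1,2), of s0 s] s assms(3) by (simp add: Rs_def)
    then show False using assms(4) by simp
  qed
  then show "z \<le> ereal s0" using s by simp
qed

lemma usc: "usc_on (normal_bundle \<phi> K) (reach_phi \<phi> K)"
  unfolding usc_on_def
proof (intro ballI allI impI)
  fix p c assume pN: "p \<in> normal_bundle \<phi> K" and lt: "reach_phi \<phi> K p < c"
  obtain a \<eta> where p: "p = (a, \<eta>)" by (cases p)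
  have a: "a \<in> K" "\<phi> \<eta> = 1" and "\<exists>s>0. \<delta> (a + s *\<^sub>R \<eta>) = s" using pN p by (auto simp: normal_bundle_def)
  then obtain s1 where s1: "s1 \<in> Rs a \<eta>" by (auto simp: Rs_def)
  obtain s0 where s0: "reach_phi \<phi> K p < ereal s0" "ereal s0 < c" using ereal_dense2[OF lt] by blast
  have "ereal s1 < ereal s0" using reach_ge[OF s1] s0(1) p by (metis order_le_less_trans)
  then have s0pos: "0 < s0" using s1 by (simp add: Rs_def)
  have ne: "\<delta> (a + s0 *\<^sub>R \<eta>) \<noteq> s0"
  proof
    assume "\<delta> (a + s0 *\<^sub>R \<eta>) = s0"
    then have "s0 \<in> Rs a \<eta>" using s0pos by (simp add: Rs_def)
    then show False using reach_ge[of s0 a \<eta>] s0(1) p by simp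
  qed
  have ic: "isCont \<delta> z" for z using d_cont[of UNIV] by (simp add: continuous_on_eq_continuous_at)
  have "((\<lambda>q. fst q + s0 *\<^sub>R snd q) \<longlongrightarrow> fst p + s0 *\<^sub>R snd p) (at p within normal_bundle \<phi> K)"
    by (intro tendsto_intros)
  then have "((\<lambda>q. \<delta> (fst q + s0 *\<^sub>R snd q)) \<longlongrightarrow> \<delta> (fst p + s0 *\<^sub>R snd p)) (at p within normal_bundle \<phi> K)"
    by (rule isCont_tendsto_compose[OF ic])
  then have ev1: "\<forall>\<^sub>F q in at p within normal_bundle \<phi> K. \<delta> (fst q + s0 *\<^sub>R snd q) \<noteq> s0"
    by (rule tendsto_imp_eventually_ne) (use ne p in simp)
  have ev2: "\<forall>\<^sub>F q in at p within normal_bundle \<phi> K. q \<in> normal_bundle \<phi> K"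
    by (simp add: eventually_at_filter)
  show "\<forall>\<^sub>F q in at p within normal_bundle \<phi> K. reach_phi \<phi> K q < c"
    using eventually_conj[OF ev1 ev2]
  proof (rule eventually_mono)
    fix q assume q: "\<delta> (fst q + s0 *\<^sub>R snd q) \<noteq> s0 \<and> q \<in> normal_bundle \<phi> K"
    obtain b \<zeta> where qq: "q = (b, \<zeta>)" by (cases q)
    have "b \<in> K" "\<phi> \<zeta> = 1" using q qq by (auto simp: normal_bundle_def)
    then have "reach_phi \<phi> K q \<le> ereal s0" using reach_le_s0[of b \<zeta> s0] q qq s0pos by simp
    then show "reach_phi \<phi> K q < c" using s0(2) by simp
  qed
qed


lemma xi_facts:
  assumes x: "x \<notin> K" "x \<notin> cut_phi \<phi> K"
  obtains a where "a \<in> K" "xi_pt \<phi> K x = a" "\<delta> x > 0" "\<phi> (x - a) = \<delta> x"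
    "nu_phi \<phi> K x = (1 / \<delta> x) *\<^sub>R (x - a)"
proof -
  obtain a where a: "a \<in> K" "\<phi> (a - x) = \<delta> x" using d_attained by blast
  have xi: "xi_set \<phi> K x = {a}" "\<delta> x > 0" using xi_unique[OF x a] by auto
  have xp: "xi_pt \<phi> K x = a" by (simp add: xi_pt_def xi)
  show ?thesis
    by (rule that[OF a(1) xp xi(2)]) (use a(2) nrm_commute[OF N, of x a] xp in \<open>auto simp: nu_phi_def\<close>)
qed

lemma N_char: "normal_bundle \<phi> K = {(xi_pt \<phi> K x, nu_phi \<phi> K x) | x. x \<notin> K \<union> cut_phi \<phi> K}"
proof
  show "{(xi_pt \<phi> K x, nu_phi \<phi> K x) | x. x \<notin> K \<union> cut_phi \<phi> K} \<subseteq> normal_bundle \<phi> K"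
  proof
    fix p assume "p \<in> {(xi_pt \<phi> K x, nu_phi \<phi> K x) | x. x \<notin> K \<union> cut_phi \<phi> K}"
    then obtain x where p: "p = (xi_pt \<phi> K x, nu_phi \<phi> K x)" and x: "x \<notin> K" "x \<notin> cut_phi \<phi> K" by blast
    obtain a where a: "a \<in> K" "xi_pt \<phi> K x = a" "\<delta> x > 0" "\<phi> (x - a) = \<delta> x"
      "nu_phi \<phi> K x = (1 / \<delta> x) *\<^sub>R (x - a)" by (rule xi_facts[OF x])
    have e1: "\<phi> ((1 / \<delta> x) *\<^sub>R (x - a)) = 1" using a by (simp add: nrm_scale[OF N])
    have e2: "a + \<delta> x *\<^sub>R ((1 / \<delta> x) *\<^sub>R (x - a)) = x" using a by simp
    show "p \<in> normal_bundle \<phi> K" unfolding p a(2) a(5) normal_bundle_def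
      using a(1,3) e1 e2 by auto
  qed
  show "normal_bundle \<phi> K \<subseteq> {(xi_pt \<phi> K x, nu_phi \<phi> K x) | x. x \<notin> K \<union> cut_phi \<phi> K}"
  proof
    fix p assume pN: "p \<in> normal_bundle \<phi> K"
    obtain a \<eta> where p: "p = (a, \<eta>)" by (cases p)
    have a: "a \<in> K" "\<phi> \<eta> = 1" and "\<exists>s>0. \<delta> (a + s *\<^sub>R \<eta>) = s" using pN p by (auto simp: normal_bundle_def)
    then obtain s0 where s0: "s0 \<in> Rs a \<eta>" by (auto simp: Rs_def)
    have s0p: "s0 > 0" "\<delta> (a + s0 *\<^sub>R \<eta>) = s0" using s0 by (auto simp: Rs_def)
    define t where "t = s0 / 2"
    have t: "0 < t" "t < s0" using s0p by (auto simp: t_def)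
    define x where "x = a + t *\<^sub>R \<eta>"
    have dx: "\<delta> x = t" unfolding x_def by (rule interval[OF a, of t s0]) (use t s0p in auto)
    have xK: "x \<notin> K" using d_zero_iff[of x] dx t by simp
    have xC: "x \<notin> cut_phi \<phi> K"
    proof
      assume "x \<in> cut_phi \<phi> K"
      then obtain b \<zeta> where bz: "x = b + real_of_ereal (reach_phi \<phi> K (b, \<zeta>)) *\<^sub>R \<zeta>"
        "(b, \<zeta>) \<in> normal_bundle \<phi> K" "reach_phi \<phi> K (b, \<zeta>) < \<infinity>"
        unfolding cut_phi_def by blast
      obtain r where r: "r > 0" "reach_phi \<phi> K (b, \<zeta>) = ereal r" "\<delta> (b + r *\<^sub>R \<zeta>) = r"
        using reach_attained[OF bz(2,3)] by blast
      have b: "b \<in> K" "\<phi> \<zeta> = 1" using bz(2) by (auto simp: normal_bundle_def)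
      have xr: "x = b + r *\<^sub>R \<zeta>" using bz(1) r(2) by simp
      have rt: "r = t" using dx r(3) xr by simp
      have "\<phi> (x - b) = \<delta> x" using xr r(1) b(2) rt dx by (simp add: nrm_scale[OF N])
      then have ba: "b = a" using uniq[OF a t s0p(2) b(1)] by (simp add: x_def)
      then have "ereal s0 \<le> reach_phi \<phi> K (b, \<zeta>)"
        using xr rt x_def t r(1) reach_ge[OF s0] by (simp)
      then show False using r(2) rt t by simp
    qed
    have xa: "\<phi> (a - x) = \<delta> x" using dx t a(2) nrm_neg[OF N, of "t *\<^sub>R \<eta>"] by (simp add: x_def nrm_scale[OF N])
    have xi: "xi_set \<phi> K x = {a}" using xi_unique[OF xK xC a(1) xa] by simp
    have "xi_pt \<phi> K x = a" by (simp add: xi_pt_def xi)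
    moreover have "nu_phi \<phi> K x = \<eta>" using calculation dx t by (simp add: nu_phi_def x_def)
    ultimately have "p = (xi_pt \<phi> K x, nu_phi \<phi> K x)" using p by simp
    then show "p \<in> {(xi_pt \<phi> K x, nu_phi \<phi> K x) | x. x \<notin> K \<union> cut_phi \<phi> K}" using xK xC by blast
  qed
qed

lemma formula:
  assumes x: "x \<notin> K" "x \<notin> cut_phi \<phi> K"
  shows "reach_phi \<phi> K (xi_pt \<phi> K x, nu_phi \<phi> K x) = ereal (\<delta> x) * rho_phi \<phi> K x"
proof -
  obtain a where a: "a \<in> K" "xi_pt \<phi> K x = a" "\<delta> x > 0" "\<phi> (x - a) = \<delta> x"
    "nu_phi \<phi> K x = (1 / \<delta> x) *\<^sub>R (x - a)" by (rule xi_facts[OF x])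
  define d where "d = \<delta> x"
  define \<eta> where "\<eta> = (1 / d) *\<^sub>R (x - a)"
  define S where "S = {s. \<delta> (a + s *\<^sub>R (x - a)) = s * d}"
  have dpos: "d > 0" using a by (simp add: d_def)
  have rho: "rho_phi \<phi> K x = Sup (ereal ` S)" by (simp add: rho_phi_def a(2) S_def d_def Let_def)
  have lhs: "reach_phi \<phi> K (xi_pt \<phi> K x, nu_phi \<phi> K x) = reach_phi \<phi> K (a, \<eta>)"
    by (simp add: a(2) a(5) \<eta>_def d_def)
  have conv: "a + s *\<^sub>R (x - a) = a + (s * d) *\<^sub>R \<eta>" for s using dpos by (simp add: \<eta>_def)
  have xe: "a + d *\<^sub>R \<eta> = x" using conv[of 1] by simp
  have dR: "d \<in> Rs a \<eta>" unfolding Rs_def using xe dpos d_def by simp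
  have rpos: "0 \<le> reach_phi \<phi> K (a, \<eta>)" using reach_ge[OF dR] dpos
    by (meson ereal_less_eq(5) less_imp_le order_trans)
  have le1: "reach_phi \<phi> K (a, \<eta>) \<le> ereal d * Sup (ereal ` S)"
    unfolding reach_eq
  proof (rule Sup_least)
    fix z assume "z \<in> ereal ` Rs a \<eta>"
    then obtain r where r: "r \<in> Rs a \<eta>" "z = ereal r" by blast
    have "r / d \<in> S" using r(1) conv[of "r / d"] dpos by (simp add: S_def Rs_def)
    then have "ereal (r / d) \<le> Sup (ereal ` S)" by (simp add: Sup_upper)
    then have "ereal d * ereal (r / d) \<le> ereal d * Sup (ereal ` S)"
      by (rule ereal_mult_left_mono) (use dpos in simp)
    then show "z \<le> ereal d * Sup (ereal ` S)" using r(2) dpos by simp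
  qed
  have le2: "Sup (ereal ` S) \<le> ereal (1 / d) * reach_phi \<phi> K (a, \<eta>)"
  proof (rule Sup_least)
    fix z assume "z \<in> ereal ` S"
    then obtain s where s: "s \<in> S" "z = ereal s" by blast
    show "z \<le> ereal (1 / d) * reach_phi \<phi> K (a, \<eta>)"
    proof (cases "s > 0")
      case False
      have "0 \<le> ereal (1 / d) * reach_phi \<phi> K (a, \<eta>)" using rpos dpos by (simp add: ereal_zero_le_0_iff)
      moreover have "z \<le> 0" using False s(2) by simp
      ultimately show ?thesis by (rule order_trans[rotated])
    next
      case True
      have "\<delta> (a + (s * d) *\<^sub>R \<eta>) = s * d" using s(1) conv[of s] by (simp add: S_def)
      then have "s * d \<in> Rs a \<eta>" using True dpos by (simp add: Rs_def)
      then have "ereal (s * d) \<le> reach_phi \<phi> K (a, \<eta>)" by (rule reach_ge)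
      then have "ereal (1 / d) * ereal (s * d) \<le> ereal (1 / d) * reach_phi \<phi> K (a, \<eta>)"
        by (rule ereal_mult_left_mono) (use dpos in simp)
      then show ?thesis using s(2) dpos by simp
    qed
  qed
  have "ereal d * Sup (ereal ` S) \<le> ereal d * (ereal (1 / d) * reach_phi \<phi> K (a, \<eta>))"
    by (rule ereal_mult_left_mono[OF le2]) (use dpos in simp)
  also have "\<dots> = (ereal d * ereal (1 / d)) * reach_phi \<phi> K (a, \<eta>)" by (rule mult.assoc[symmetric])
  also have "ereal d * ereal (1 / d) = 1" using dpos by simp
  finally have "ereal d * Sup (ereal ` S) \<le> reach_phi \<phi> K (a, \<eta>)" by simp
  then have "reach_phi \<phi> K (a, \<eta>) = ereal d * Sup (ereal ` S)" using le1 by (rule antisym[rotated])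
  then show ?thesis unfolding lhs rho d_def .
qed

end
theorem lemma2p35:
  fixes \<phi> :: "'a::euclidean_space \<Rightarrow> real" and K :: "'a set"
  assumes "strictly_convex_norm \<phi>"
    and "C2_on (UNIV - {0}) \<phi>"
    and "closed K" and "K \<noteq> {}"
  shows "usc_on (normal_bundle \<phi> K) (reach_phi \<phi> K) \<and>
         normal_bundle \<phi> K =
           {(xi_pt \<phi> K x, nu_phi \<phi> K x) | x. x \<notin> K \<union> cut_phi \<phi> K} \<and>
         (\<forall>x. x \<notin> K \<union> cut_phi \<phi> K \<longrightarrow>
           reach_phi \<phi> K (xi_pt \<phi> K x, nu_phi \<phi> K x) = ereal (dist_phi \<phi> K x) * rho_phi \<phi> K x)"
proof -
  interpret SNK \<phi> K
    using assms by unfold_locales (auto simp: strictly_convex_norm_def)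
  show ?thesis using usc N_char formula by auto
qed

end
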